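(* Consider a fully-connected neural network whose first hidden layer has weights $w^1_{ij}$ (input feature $i\in\{1,\dots,m\}$, neuron $j$) and biases $b^1_j$, so that neuron $j$ has pre-activation $\sum_{i=1}^m x^i w^1_{ij}+b^1_j$, and whose output depends on the parameters and the input only through the network function; the likelihood of a dataset $D=\{(x_k,y_k)\}_{k=1}^n$ is $p(D\mid W)=\prod_k \ell(y_k,f(x_k,W))$ and the posterior is $p(W\mid D)\propto p(D\mid W)p(W)$. Suppose the prior over the first-layer weights $w^1_{ij}$ and biases $b^1_j$ is i.i.d. $\mathcal{N}(0,\alpha^2)$ and independent of the other parameters. Suppose all training inputs lie in an affine subspace: $\sum_{j=1}^m x_k^j c_j=c_0$ for all $k=1,\dots,n$, for constants $c_0,\dots,c_m$ with $\sum_{i=0}^m c_i^2=1$. Then: (1) for every first-layer neuron $j$, the posterior distribution of $w^c_j=\sum_{i=1}^m c_i w^1_{ij}-c_0 b^1_j$ (the projection of $(w^1_{1j},\dots,w^1_{mj},b^1_j)$ on the direction $(c_1,\dots,c_m,-c_0)$) coincides with the prior $\mathcal{N}(0,\alpha^2)$; (2) the MAP solution sets $w^c_j$ to zero.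
   Context: A MAP solution is a maximizer of the posterior density $p(W\mid D)$. *)

theory Defs
  imports "HOL-Probability.Probability"
begin

text \<open>Parameters of the network: first-layer weights w (row j = incoming weights of
 neuron j, entry i = input feature i), first-layer biases b, and all remaining
 parameters theta (living in some Euclidean space).\<close>
type_synonym ('m, 'h, 'p) params = "((real^'m^'h) \<times> (real^'h)) \<times> 'p"

definition preact :: "real^'m \<Rightarrow> real^'m^'h \<Rightarrow> real^'h \<Rightarrow> real^'h" where
  "preact x w b = (\<chi> j. (\<Sum>i\<in>UNIV. x$i * w$j$i) + b$j)"

text \<open>Fully connected network: the output depends on the first layer only through
 the pre-activations of the first hidden layer; F is the rest of the network.\<close>
definition net :: "(real^'h \<Rightarrow> 'p \<Rightarrow> 'o) \<Rightarrow> real^'m \<Rightarrow> ('m,'h,'p) params \<Rightarrow> 'o" where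
  "net F x W = (case W of ((w, b), \<theta>) \<Rightarrow> F (preact x w b) \<theta>)"

definition likelihood ::
  "('y \<Rightarrow> 'o \<Rightarrow> real) \<Rightarrow> (real^'h \<Rightarrow> 'p \<Rightarrow> 'o) \<Rightarrow> nat \<Rightarrow> (nat \<Rightarrow> real^'m) \<Rightarrow> (nat \<Rightarrow> 'y)
    \<Rightarrow> ('m,'h,'p) params \<Rightarrow> real" where
  "likelihood L F n xs ys W = (\<Prod>k<n. L (ys k) (net F (xs k) W))"

definition prior :: "real \<Rightarrow> ('p \<Rightarrow> real) \<Rightarrow> ('m::finite,'h::finite,'p) params \<Rightarrow> real" where
  "prior \<alpha> q W = (case W of ((w, b), \<theta>) \<Rightarrow>
     (\<Prod>j\<in>UNIV. (\<Prod>i\<in>UNIV. normal_density 0 \<alpha> (w$j$i)) * normal_density 0 \<alpha> (b$j)) * q \<theta>)"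

definition evidence ::
  "('y \<Rightarrow> 'o \<Rightarrow> real) \<Rightarrow> (real^'h \<Rightarrow> 'p \<Rightarrow> 'o) \<Rightarrow> nat \<Rightarrow> (nat \<Rightarrow> real^'m) \<Rightarrow> (nat \<Rightarrow> 'y)
    \<Rightarrow> real \<Rightarrow> ('p::euclidean_space \<Rightarrow> real) \<Rightarrow> ennreal" where
  "evidence L F n xs ys \<alpha> q =
     (\<integral>\<^sup>+ W. ennreal (likelihood L F n xs ys W * prior \<alpha> q W) \<partial>(lborel :: ('m::finite,'h::finite,'p) params measure))"

definition post_density ::
  "('y \<Rightarrow> 'o \<Rightarrow> real) \<Rightarrow> (real^'h \<Rightarrow> 'p \<Rightarrow> 'o) \<Rightarrow> nat \<Rightarrow> (nat \<Rightarrow> real^'m) \<Rightarrow> (nat \<Rightarrow> 'y)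
    \<Rightarrow> real \<Rightarrow> ('p::euclidean_space \<Rightarrow> real) \<Rightarrow> ('m::finite,'h::finite,'p) params \<Rightarrow> real" where
  "post_density L F n xs ys \<alpha> q W =
     likelihood L F n xs ys W * prior \<alpha> q W / enn2real (evidence L F n xs ys \<alpha> q)"

definition posterior ::
  "('y \<Rightarrow> 'o \<Rightarrow> real) \<Rightarrow> (real^'h \<Rightarrow> 'p \<Rightarrow> 'o) \<Rightarrow> nat \<Rightarrow> (nat \<Rightarrow> real^'m) \<Rightarrow> (nat \<Rightarrow> 'y)
    \<Rightarrow> real \<Rightarrow> ('p::euclidean_space \<Rightarrow> real) \<Rightarrow> ('m::finite,'h::finite,'p) params measure" where
  "posterior L F n xs ys \<alpha> q =
     density lborel (\<lambda>W. ennreal (post_density L F n xs ys \<alpha> q W))"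

definition wc :: "real^'m::finite \<Rightarrow> real \<Rightarrow> 'h::finite \<Rightarrow> ('m,'h,'p) params \<Rightarrow> real" where
  "wc c c0 j W = (case W of ((w, b), \<theta>) \<Rightarrow> (\<Sum>i\<in>UNIV. c$i * w$j$i) - c0 * b$j)"

end

theory Submission
  imports Defs
begin

lemma shift_nn:
  fixes h :: "'a::euclidean_space \<Rightarrow> ennreal" and a :: 'a
  assumes [measurable]: "h \<in> borel_measurable borel"
  shows "(\<integral>\<^sup>+x. h x \<partial>lborel) = (\<integral>\<^sup>+x. h (a + x) \<partial>lborel)"
proof -
  have "(\<integral>\<^sup>+x. h x \<partial>(distr lborel borel ((+) a))) = (\<integral>\<^sup>+x. h (a + x) \<partial>lborel)"
    by (simp add: nn_integral_distr)
  thus ?thesis by (simp add: lborel_distr_plus)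
qed

lemma normal_shift_int:
  assumes "\<alpha> > 0" shows "(\<integral>\<^sup>+t. ennreal (normal_density 0 \<alpha> (x - t)) \<partial>lborel) = 1"
proof -
  have e: "normal_density 0 \<alpha> (x - t) = normal_density x \<alpha> t" for t
    by (simp add: normal_density_def power2_commute)
  have "emeasure (density lborel (\<lambda>t. ennreal (normal_density x \<alpha> t))) UNIV = 1"
    using prob_space.emeasure_space_1[OF prob_space_normal_density[of \<alpha> x]] assms by simp
  thus ?thesis by (simp add: e emeasure_density)
qed

lemma key_integral:
  fixes s :: "'a::euclidean_space \<Rightarrow> real" and V :: 'a and G :: "'a \<Rightarrow> ennreal"
    and g :: "real \<Rightarrow> ennreal"
  assumes [measurable]: "s \<in> borel_measurable borel" "G \<in> borel_measurable borel"
    "g \<in> borel_measurable borel"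
  and sV: "\<And>x t. s (t *\<^sub>R V + x) = t + s x"
  and GV: "\<And>x t. G (t *\<^sub>R V + x) = G x" and ap: "\<alpha> > 0"
  shows "(\<integral>\<^sup>+x. g (s x) * G x \<partial>lborel)
     = (\<integral>\<^sup>+y. g y \<partial>lborel) * (\<integral>\<^sup>+x. ennreal (normal_density 0 \<alpha> (s x)) * G x \<partial>lborel)"
proof -
  let ?\<phi> = "normal_density 0 \<alpha>"
  have "(\<integral>\<^sup>+x. g (s x) * G x \<partial>lborel)
      = (\<integral>\<^sup>+x. (\<integral>\<^sup>+t. g (s x) * G x * ennreal (?\<phi> (s x - t)) \<partial>lborel) \<partial>lborel)"
    by (simp add: nn_integral_cmult normal_shift_int[OF ap])
  also have "\<dots> = (\<integral>\<^sup>+t. (\<integral>\<^sup>+x. g (s x) * G x * ennreal (?\<phi> (s x - t)) \<partial>lborel) \<partial>lborel)"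
    by (subst lborel_pair.Fubini') (auto simp: case_prod_unfold cong: measurable_cong_sets)
  also have "\<dots> = (\<integral>\<^sup>+t. (\<integral>\<^sup>+x. g (t + s x) * G x * ennreal (?\<phi> (s x)) \<partial>lborel) \<partial>lborel)"
  proof (rule nn_integral_cong)
    fix t
    have "(\<integral>\<^sup>+x. g (s x) * G x * ennreal (?\<phi> (s x - t)) \<partial>lborel)
       = (\<integral>\<^sup>+x. g (s (t *\<^sub>R V + x)) * G (t *\<^sub>R V + x) * ennreal (?\<phi> (s (t *\<^sub>R V + x) - t)) \<partial>lborel)"
      by (rule shift_nn) measurable
    also have "\<dots> = (\<integral>\<^sup>+x. g (t + s x) * G x * ennreal (?\<phi> (s x)) \<partial>lborel)"
      by (simp add: sV GV)
    finally show "(\<integral>\<^sup>+x. g (s x) * G x * ennreal (?\<phi> (s x - t)) \<partial>lborel)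
       = (\<integral>\<^sup>+x. g (t + s x) * G x * ennreal (?\<phi> (s x)) \<partial>lborel)" .
  qed
  also have "\<dots> = (\<integral>\<^sup>+x. (\<integral>\<^sup>+t. g (t + s x) * G x * ennreal (?\<phi> (s x)) \<partial>lborel) \<partial>lborel)"
    by (subst lborel_pair.Fubini') (auto simp: case_prod_unfold cong: measurable_cong_sets)
  also have "\<dots> = (\<integral>\<^sup>+x. (\<integral>\<^sup>+t. g (s x + t) \<partial>lborel) * (ennreal (?\<phi> (s x)) * G x) \<partial>lborel)"
  proof (rule nn_integral_cong)
    fix x
    have "(\<integral>\<^sup>+t. g (t + s x) * G x * ennreal (?\<phi> (s x)) \<partial>lborel)
      = (\<integral>\<^sup>+t. g (s x + t) * (ennreal (?\<phi> (s x)) * G x) \<partial>lborel)"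
      by (simp add: add.commute mult.commute mult.left_commute)
    also have "\<dots> = (\<integral>\<^sup>+t. g (s x + t) \<partial>lborel) * (ennreal (?\<phi> (s x)) * G x)"
      by (rule nn_integral_multc) measurable
    finally show "(\<integral>\<^sup>+t. g (t + s x) * G x * ennreal (?\<phi> (s x)) \<partial>lborel)
      = (\<integral>\<^sup>+t. g (s x + t) \<partial>lborel) * (ennreal (?\<phi> (s x)) * G x)" .
  qed
  also have "\<dots> = (\<integral>\<^sup>+x. (\<integral>\<^sup>+y. g y \<partial>lborel) * (ennreal (?\<phi> (s x)) * G x) \<partial>lborel)"
    using shift_nn[of g] by simp
  also have "\<dots> = (\<integral>\<^sup>+y. g y \<partial>lborel) * (\<integral>\<^sup>+x. ennreal (?\<phi> (s x)) * G x \<partial>lborel)"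
    by (simp add: nn_integral_cmult)
  finally show ?thesis .
qed

lemma prod_normal:
  fixes y :: "'m::finite \<Rightarrow> real"
  shows "(\<Prod>i\<in>UNIV. normal_density 0 \<alpha> (y i))
     = (1 / sqrt (2 * pi * \<alpha>\<^sup>2)) ^ CARD('m) * exp (- (\<Sum>i\<in>UNIV. (y i)\<^sup>2) / (2 * \<alpha>\<^sup>2))"
proof -
  have "(\<Prod>i\<in>UNIV. normal_density 0 \<alpha> (y i))
     = (\<Prod>i\<in>UNIV. (1 / sqrt (2 * pi * \<alpha>\<^sup>2)) * exp (- ((y i)\<^sup>2 / (2 * \<alpha>\<^sup>2))))"
    by (simp add: normal_density_def)
  also have "\<dots> = (1 / sqrt (2 * pi * \<alpha>\<^sup>2)) ^ CARD('m) * exp (\<Sum>i\<in>UNIV. - ((y i)\<^sup>2 / (2 * \<alpha>\<^sup>2)))"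
    by (simp only: prod.distrib prod_constant) (simp add: exp_sum)
  also have "\<dots> = (1 / sqrt (2 * pi * \<alpha>\<^sup>2)) ^ CARD('m) * exp (- (\<Sum>i\<in>UNIV. (y i)\<^sup>2) / (2 * \<alpha>\<^sup>2))"
    by (simp add: sum_negf sum_divide_distrib)
  finally show ?thesis .
qed

lemma row_identity:
  fixes w c :: "real^'m::finite" and b c0 t :: real
  assumes unit: "c0\<^sup>2 + (\<Sum>i\<in>UNIV. (c$i)\<^sup>2) = 1"
  shows "(\<Prod>i\<in>UNIV. normal_density 0 \<alpha> (w$i + t * c$i)) * normal_density 0 \<alpha> (b - t * c0)
           * normal_density 0 \<alpha> ((\<Sum>i\<in>UNIV. c$i * w$i) - c0 * b)
       = (\<Prod>i\<in>UNIV. normal_density 0 \<alpha> (w$i)) * normal_density 0 \<alpha> b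
           * normal_density 0 \<alpha> (t + ((\<Sum>i\<in>UNIV. c$i * w$i) - c0 * b))"
proof -
  define K where "K = 1 / sqrt (2 * pi * \<alpha>\<^sup>2)"
  define D where "D = 2 * \<alpha>\<^sup>2"
  define s where "s = (\<Sum>i\<in>UNIV. c$i * w$i) - c0 * b"
  have nd: "normal_density 0 \<alpha> x = K * exp (- x\<^sup>2 / D)" for x
    by (simp add: normal_density_def K_def D_def)
  have hsum: "(\<Sum>i\<in>UNIV. (w$i + t * c$i)\<^sup>2)
      = (\<Sum>i\<in>UNIV. (w$i)\<^sup>2) + 2 * t * (\<Sum>i\<in>UNIV. c$i * w$i) + t\<^sup>2 * (\<Sum>i\<in>UNIV. (c$i)\<^sup>2)"
    by (simp add: power2_sum sum.distrib sum_distrib_left algebra_simps power_mult_distrib)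
  have ex: "(\<Sum>i\<in>UNIV. (w$i + t * c$i)\<^sup>2) + (b - t * c0)\<^sup>2 + s\<^sup>2
      = (\<Sum>i\<in>UNIV. (w$i)\<^sup>2) + b\<^sup>2 + (t + s)\<^sup>2"
  proof -
    have cc: "(\<Sum>i\<in>UNIV. (c$i)\<^sup>2) = 1 - c0\<^sup>2" using unit by simp
    show ?thesis unfolding hsum s_def cc by (simp add: algebra_simps power2_eq_square)
  qed
  have "exp (- (\<Sum>i\<in>UNIV. (w$i + t * c$i)\<^sup>2) / D) * exp (- (b - t * c0)\<^sup>2 / D) * exp (- s\<^sup>2 / D)
      = exp (- ((\<Sum>i\<in>UNIV. (w$i + t * c$i)\<^sup>2) + (b - t * c0)\<^sup>2 + s\<^sup>2) / D)"
    unfolding exp_add[symmetric] by (rule arg_cong[where f=exp]) (simp add: diff_divide_distrib add_divide_distrib)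
  also have "\<dots> = exp (- ((\<Sum>i\<in>UNIV. (w$i)\<^sup>2) + b\<^sup>2 + (t + s)\<^sup>2) / D)" by (simp only: ex)
  also have "\<dots> = exp (- (\<Sum>i\<in>UNIV. (w$i)\<^sup>2) / D) * exp (- b\<^sup>2 / D) * exp (- (t + s)\<^sup>2 / D)"
    unfolding exp_add[symmetric] by (rule arg_cong[where f=exp]) (simp add: diff_divide_distrib add_divide_distrib)
  finally have E: "exp (- (\<Sum>i\<in>UNIV. (w$i + t * c$i)\<^sup>2) / D) * exp (- (b - t * c0)\<^sup>2 / D) * exp (- s\<^sup>2 / D)
      = exp (- (\<Sum>i\<in>UNIV. (w$i)\<^sup>2) / D) * exp (- b\<^sup>2 / D) * exp (- (t + s)\<^sup>2 / D)" .
  show ?thesis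
    unfolding prod_normal[of \<alpha> "\<lambda>i. w$i + t * c$i"] prod_normal[of \<alpha> "\<lambda>i. w$i"]
    unfolding s_def[symmetric] K_def[symmetric] D_def[symmetric] nd
    using E by (simp add: mult_ac)
qed

definition Vdir :: "real^'m \<Rightarrow> real \<Rightarrow> 'h \<Rightarrow> ('m::finite,'h::finite,'p::real_vector) params" where
  "Vdir c c0 j = (((\<chi> j'. if j' = j then c else 0), (\<chi> j'. if j' = j then - c0 else 0)), 0)"

lemma wc_shift:
  fixes c :: "real^'m::finite" and j :: "'h::finite" and W :: "('m,'h,'p::real_vector) params"
  assumes unit: "c0\<^sup>2 + (\<Sum>i\<in>UNIV. (c$i)\<^sup>2) = 1"
  shows "wc c c0 j (t *\<^sub>R Vdir c c0 j + W) = t + wc c c0 j W"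
proof -
  obtain w b \<theta> where W: "W = ((w, b), \<theta>)" by (metis prod.collapse)
  have cc: "(\<Sum>i\<in>UNIV. (c$i)\<^sup>2) = 1 - c0\<^sup>2" using unit by simp
  have "(\<Sum>i\<in>UNIV. c$i * (t * c$i + w$j$i)) = t * (\<Sum>i\<in>UNIV. (c$i)\<^sup>2) + (\<Sum>i\<in>UNIV. c$i * w$j$i)"
    by (simp add: algebra_simps sum.distrib sum_distrib_left power2_eq_square)
  thus ?thesis unfolding W wc_def Vdir_def cc
    by (simp add: algebra_simps power2_eq_square)
qed

lemma net_shift:
  fixes c :: "real^'m::finite" and j :: "'h::finite" and W :: "('m,'h,'p::real_vector) params"
  assumes aff: "(\<Sum>i\<in>UNIV. x $ i * c $ i) = c0"
  shows "net F x (t *\<^sub>R Vdir c c0 j + W) = net F x W"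
proof -
  obtain w b \<theta> where W: "W = ((w, b), \<theta>)" by (metis prod.collapse)
  have "preact x (t *\<^sub>R (\<chi> j'. if j' = j then c else 0) + w) (t *\<^sub>R (\<chi> j'. if j' = j then - c0 else 0) + b)
      = preact x w b"
  proof (subst vec_eq_iff, intro allI)
    fix j'
    have "(\<Sum>i\<in>UNIV. x$i * (t * c$i + w$j$i)) = t * (\<Sum>i\<in>UNIV. x $ i * c $ i) + (\<Sum>i\<in>UNIV. x$i * w$j$i)"
      by (simp add: algebra_simps sum.distrib sum_distrib_left)
    thus "preact x (t *\<^sub>R (\<chi> j'. if j' = j then c else 0) + w) (t *\<^sub>R (\<chi> j'. if j' = j then - c0 else 0) + b) $ j'
      = preact x w b $ j'"
      unfolding preact_def aff by simp
  qed
  thus ?thesis unfolding W net_def Vdir_def by simp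
qed

lemma prior_shift:
  fixes c :: "real^'m::finite" and j :: "'h::finite" and W :: "('m,'h,'p::real_vector) params"
  assumes unit: "c0\<^sup>2 + (\<Sum>i\<in>UNIV. (c$i)\<^sup>2) = 1"
  shows "prior \<alpha> q (t *\<^sub>R Vdir c c0 j + W) * normal_density 0 \<alpha> (wc c c0 j W)
       = prior \<alpha> q W * normal_density 0 \<alpha> (t + wc c c0 j W)"
proof -
  obtain w b \<theta> where W: "W = ((w, b), \<theta>)" by (metis prod.collapse)
  define R where "R = (\<lambda>(w::real^'m^'h) (b::real^'h) j'. (\<Prod>i\<in>UNIV. normal_density 0 \<alpha> (w$j'$i)) * normal_density 0 \<alpha> (b$j'))"
  define w' where "w' = t *\<^sub>R (\<chi> j'. if j' = j then c else 0) + w"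
  define b' where "b' = t *\<^sub>R (\<chi> j'. if j' = j then - c0 else 0) + b"
  have rest: "(\<Prod>j'\<in>UNIV - {j}. R w' b' j') = (\<Prod>j'\<in>UNIV - {j}. R w b j')"
    by (rule prod.cong) (auto simp: R_def w'_def b'_def)
  have Rj: "R w' b' j * normal_density 0 \<alpha> ((\<Sum>i\<in>UNIV. c$i * w$j$i) - c0 * b$j)
     = R w b j * normal_density 0 \<alpha> (t + ((\<Sum>i\<in>UNIV. c$i * w$j$i) - c0 * b$j))"
  proof -
    have "R w' b' j = (\<Prod>i\<in>UNIV. normal_density 0 \<alpha> (w$j$i + t * c$i)) * normal_density 0 \<alpha> (b$j - t * c0)"
      unfolding R_def w'_def b'_def by (simp add: add.commute)
    moreover have "R w b j = (\<Prod>i\<in>UNIV. normal_density 0 \<alpha> (w$j$i)) * normal_density 0 \<alpha> (b$j)"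
      unfolding R_def by simp
    ultimately show ?thesis using row_identity[OF unit, of \<alpha> "w$j" t "b$j"] by simp
  qed
  have "prior \<alpha> q (t *\<^sub>R Vdir c c0 j + W) = (\<Prod>j'\<in>UNIV. R w' b' j') * q \<theta>"
    unfolding W prior_def Vdir_def R_def w'_def b'_def by simp
  also have "\<dots> = R w' b' j * (\<Prod>j'\<in>UNIV - {j}. R w' b' j') * q \<theta>"
    by (subst prod.remove[of UNIV j]) auto
  finally have P1: "prior \<alpha> q (t *\<^sub>R Vdir c c0 j + W) = R w' b' j * (\<Prod>j'\<in>UNIV - {j}. R w b j') * q \<theta>"
    using rest by simp
  have "prior \<alpha> q W = (\<Prod>j'\<in>UNIV. R w b j') * q \<theta>"
    unfolding W prior_def R_def by simp
  also have "\<dots> = R w b j * (\<Prod>j'\<in>UNIV - {j}. R w b j') * q \<theta>"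
    by (subst prod.remove[of UNIV j]) auto
  finally have P2: "prior \<alpha> q W = R w b j * (\<Prod>j'\<in>UNIV - {j}. R w b j') * q \<theta>" .
  have wcW: "wc c c0 j W = (\<Sum>i\<in>UNIV. c$i * w$j$i) - c0 * b$j" unfolding W wc_def by simp
  define Rest where "Rest = (\<Prod>j'\<in>UNIV - {j}. R w b j') * q \<theta>"
  have "R w' b' j * (\<Prod>j'\<in>UNIV - {j}. R w b j') * q \<theta> * normal_density 0 \<alpha> ((\<Sum>i\<in>UNIV. c$i * w$j$i) - c0 * b$j)
     = (R w' b' j * normal_density 0 \<alpha> ((\<Sum>i\<in>UNIV. c$i * w$j$i) - c0 * b$j)) * Rest"
    unfolding Rest_def by (simp only: mult_ac)
  also have "\<dots> = (R w b j * normal_density 0 \<alpha> (t + ((\<Sum>i\<in>UNIV. c$i * w$j$i) - c0 * b$j))) * Rest"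
    by (simp only: Rj)
  also have "\<dots> = R w b j * (\<Prod>j'\<in>UNIV - {j}. R w b j') * q \<theta> * normal_density 0 \<alpha> (t + ((\<Sum>i\<in>UNIV. c$i * w$j$i) - c0 * b$j))"
    unfolding Rest_def by (simp only: mult_ac)
  finally show ?thesis unfolding P1 P2 wcW .
qed

lemma wc_meas:
  fixes c :: "real^'m::finite" and j :: "'h::finite"
  shows "(wc c c0 j :: ('m,'h,'p::euclidean_space) params \<Rightarrow> real) \<in> borel_measurable borel"
proof -
  have e: "(wc c c0 j :: ('m,'h,'p) params \<Rightarrow> real) = (\<lambda>W. (\<Sum>i\<in>UNIV. c$i * fst (fst W)$j$i) - c0 * snd (fst W)$j)"
    by (auto simp: wc_def fun_eq_iff split: prod.splits)
  show ?thesis unfolding e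
    by (intro borel_measurable_continuous_onI continuous_intros)
qed

lemma preact_cont: "continuous_on UNIV (\<lambda>W::('m::finite,'h::finite,'p::euclidean_space) params. preact x (fst (fst W)) (snd (fst W)))"
  unfolding preact_def by (intro continuous_intros)

lemma lik_meas':
  fixes F :: "real^'h::finite \<Rightarrow> 'p::euclidean_space \<Rightarrow> 'o" and xs :: "nat \<Rightarrow> real^'m::finite"
  assumes "\<And>k. k < n \<Longrightarrow> (\<lambda>(z, \<theta>). L (ys k) (F z \<theta>)) \<in> borel_measurable borel"
  shows "(likelihood L F n xs ys :: ('m,'h,'p) params \<Rightarrow> real) \<in> borel_measurable borel"
proof -
  have e: "(likelihood L F n xs ys :: ('m,'h,'p) params \<Rightarrow> real)
     = (\<lambda>W. \<Prod>k<n. (\<lambda>(z, \<theta>). L (ys k) (F z \<theta>)) (preact (xs k) (fst (fst W)) (snd (fst W)), snd W))"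
    by (auto simp: likelihood_def net_def fun_eq_iff split: prod.splits)
  have m: "(\<lambda>W::('m,'h,'p) params. (preact (xs k) (fst (fst W)) (snd (fst W)), snd W)) \<in> borel \<rightarrow>\<^sub>M borel" for k
    by (intro borel_measurable_continuous_onI continuous_intros preact_cont)
  show ?thesis unfolding e
    by (intro borel_measurable_prod measurable_compose[OF m] assms) simp
qed

lemma prior_meas:
  fixes q :: "'p::euclidean_space \<Rightarrow> real"
  assumes qm: "q \<in> borel_measurable borel" and a0: "\<alpha> \<noteq> 0"
  shows "(prior \<alpha> q :: ('m::finite,'h::finite,'p) params \<Rightarrow> real) \<in> borel_measurable borel"
proof -
  have e: "(prior \<alpha> q :: ('m,'h,'p) params \<Rightarrow> real)
     = (\<lambda>W. (\<Prod>j\<in>UNIV. (\<Prod>i\<in>UNIV. normal_density 0 \<alpha> (fst (fst W)$j$i)) * normal_density 0 \<alpha> (snd (fst W)$j)) * q (snd W))"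
    by (auto simp: prior_def fun_eq_iff split: prod.splits)
  have c: "continuous_on UNIV (\<lambda>W::('m,'h,'p) params. (\<Prod>j\<in>UNIV. (\<Prod>i\<in>UNIV. normal_density 0 \<alpha> (fst (fst W)$j$i)) * normal_density 0 \<alpha> (snd (fst W)$j)))"
    unfolding normal_density_def by (intro continuous_intros) (auto simp: a0)
  have q2: "(\<lambda>W::('m,'h,'p) params. q (snd W)) \<in> borel_measurable borel"
    by (rule measurable_compose[OF _ qm]) (intro borel_measurable_continuous_onI continuous_intros)
  show ?thesis unfolding e
    by (intro borel_measurable_times borel_measurable_continuous_onI c q2)
qed

theorem proposition2:
  fixes L :: "'y \<Rightarrow> 'o \<Rightarrow> real"
    and F :: "real^'h::finite \<Rightarrow> 'p::euclidean_space \<Rightarrow> 'o"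
    and n :: nat and xs :: "nat \<Rightarrow> real^'m::finite" and ys :: "nat \<Rightarrow> 'y"
    and \<alpha> :: real and q :: "'p \<Rightarrow> real"
    and c :: "real^'m" and c0 :: real
  assumes alpha_pos: "\<alpha> > 0"
    and lik_nonneg: "\<And>y o'. 0 \<le> L y o'"
    and lik_meas: "\<And>k. k < n \<Longrightarrow> (\<lambda>(z, \<theta>). L (ys k) (F z \<theta>)) \<in> borel_measurable borel"
    and q_meas: "q \<in> borel_measurable borel"
    and q_nonneg: "\<And>\<theta>. 0 \<le> q \<theta>"
    and q_prob: "(\<integral>\<^sup>+ \<theta>. ennreal (q \<theta>) \<partial>lborel) = 1"
    and ev_pos: "0 < evidence L F n xs ys \<alpha> q"
    and ev_fin: "evidence L F n xs ys \<alpha> q < \<infinity>"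
    and c_unit: "c0\<^sup>2 + (\<Sum>i\<in>UNIV. (c$i)\<^sup>2) = 1"
    and affine: "\<And>k. k < n \<Longrightarrow> (\<Sum>i\<in>UNIV. xs k $ i * c $ i) = c0"
  shows "(\<forall>j. distr (posterior L F n xs ys \<alpha> q) lborel (wc c c0 j)
                = density lborel (\<lambda>t. ennreal (normal_density 0 \<alpha> t)))
       \<and> (\<forall>Wmap :: ('m,'h,'p) params.
            (\<forall>W. post_density L F n xs ys \<alpha> q W \<le> post_density L F n xs ys \<alpha> q Wmap)
            \<longrightarrow> (\<forall>j. wc c c0 j Wmap = 0))"
proof -
  let ?\<phi> = "normal_density 0 \<alpha>"
  define f :: "('m,'h,'p) params \<Rightarrow> real" where "f W = likelihood L F n xs ys W * prior \<alpha> q W" for W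
  define Z where "Z = enn2real (evidence L F n xs ys \<alpha> q)"
  have f_nonneg: "0 \<le> f W" for W
    unfolding f_def likelihood_def prior_def using lik_nonneg q_nonneg
    by (auto intro!: mult_nonneg_nonneg prod_nonneg split: prod.splits)
  have ev: "evidence L F n xs ys \<alpha> q = (\<integral>\<^sup>+W. ennreal (f W) \<partial>lborel)"
    unfolding evidence_def f_def ..
  have evZ: "evidence L F n xs ys \<alpha> q = ennreal Z"
    unfolding Z_def using ev_fin by (simp add: ennreal_enn2real_if)
  have Zpos: "Z > 0" using ev_pos ev_fin unfolding Z_def
    by (simp add: enn2real_positive_iff)
  have post: "post_density L F n xs ys \<alpha> q W = f W / Z" for W
    unfolding post_density_def f_def Z_def ..
  have f_meas: "f \<in> borel_measurable borel"
    unfolding f_def[abs_def]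
    using lik_meas'[where L=L and F=F and n=n and ys=ys and xs=xs, OF lik_meas] prior_meas[OF q_meas, of \<alpha>] alpha_pos
    by (intro borel_measurable_times) auto
  have phipos: "?\<phi> x > 0" for x using alpha_pos by (rule normal_density_pos)
  have phine: "?\<phi> x \<noteq> 0" for x using phipos[of x] by simp
  have f_shift: "f (t *\<^sub>R Vdir c c0 j + W) * ?\<phi> (wc c c0 j W) = f W * ?\<phi> (t + wc c c0 j W)" for t j W
  proof -
    have "likelihood L F n xs ys (t *\<^sub>R Vdir c c0 j + W) = likelihood L F n xs ys W"
      unfolding likelihood_def by (rule prod.cong) (auto simp: net_shift affine)
    thus ?thesis unfolding f_def using prior_shift[OF c_unit, of \<alpha> q t j W]
      by (metis mult.assoc)
  qed
  have part1: "distr (posterior L F n xs ys \<alpha> q) lborel (wc c c0 j)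
                = density lborel (\<lambda>t. ennreal (?\<phi> t))" for j
  proof -
    let ?s = "wc c c0 j :: ('m,'h,'p) params \<Rightarrow> real"
    define G where "G W = ennreal (f W / (?\<phi> (?s W) * Z))" for W
    have s_meas[measurable]: "?s \<in> borel_measurable borel" by (rule wc_meas)
    have G_meas[measurable]: "G \<in> borel_measurable borel"
      unfolding G_def[abs_def] using f_meas by measurable
    have sV: "?s (t *\<^sub>R Vdir c c0 j + W) = t + ?s W" for t W by (rule wc_shift[OF c_unit])
    have GV: "G (t *\<^sub>R Vdir c c0 j + W) = G W" for t W
    proof -
      define a where "a = ?\<phi> (?s W)"
      define b where "b = ?\<phi> (t + ?s W)"
      have a0: "a > 0" and b0: "b > 0" unfolding a_def b_def by (rule phipos)+
      have e1: "f (t *\<^sub>R Vdir c c0 j + W) = f W * b / a"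
        using f_shift[of t j W] a0 unfolding a_def[symmetric] b_def[symmetric]
        by (simp add: eq_divide_eq)
      have "f (t *\<^sub>R Vdir c c0 j + W) / (b * Z) = f W / (a * Z)"
        unfolding e1 using a0 b0 Zpos by simp
      thus ?thesis unfolding G_def sV a_def b_def by simp
    qed
    have intG: "(\<integral>\<^sup>+W. ennreal (?\<phi> (?s W)) * G W \<partial>lborel) = 1"
    proof -
      have "(\<integral>\<^sup>+W. ennreal (?\<phi> (?s W)) * G W \<partial>lborel) = (\<integral>\<^sup>+W. ennreal (f W) * ennreal (1 / Z) \<partial>lborel)"
        unfolding G_def
        by (rule nn_integral_cong) (use phipos phine Zpos f_nonneg in \<open>simp add: ennreal_mult[symmetric] field_simps\<close>)
      also have "\<dots> = (\<integral>\<^sup>+W. ennreal (f W) \<partial>lborel) * ennreal (1 / Z)"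
        by (rule nn_integral_multc) (use f_meas in measurable)
      also have "\<dots> = 1" unfolding ev[symmetric] evZ using Zpos
        by (simp add: ennreal_mult[symmetric])
      finally show ?thesis .
    qed
    show ?thesis
    proof (rule measure_eqI)
      show "sets (distr (posterior L F n xs ys \<alpha> q) lborel ?s) = sets (density lborel (\<lambda>t. ennreal (?\<phi> t)))"
        by simp
      fix A assume A: "A \<in> sets (distr (posterior L F n xs ys \<alpha> q) lborel ?s)"
      hence Ab[measurable]: "A \<in> sets borel" by simp
      have pre: "?s -` A \<in> sets borel" using s_meas Ab by (rule measurable_sets_borel)
      have sm: "?s \<in> posterior L F n xs ys \<alpha> q \<rightarrow>\<^sub>M lborel"
        unfolding posterior_def by (simp cong: measurable_cong_sets)
      have pm: "(\<lambda>W. ennreal (post_density L F n xs ys \<alpha> q W)) \<in> borel_measurable lborel"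
        unfolding post using f_meas by (simp cong: measurable_cong_sets)
      have "emeasure (distr (posterior L F n xs ys \<alpha> q) lborel ?s) A
          = emeasure (posterior L F n xs ys \<alpha> q) (?s -` A \<inter> space (posterior L F n xs ys \<alpha> q))"
        using A sm by (simp add: emeasure_distr)
      also have "\<dots> = (\<integral>\<^sup>+W. ennreal (post_density L F n xs ys \<alpha> q W) * indicator (?s -` A) W \<partial>lborel)"
        unfolding posterior_def
        by (subst emeasure_density) (use pm pre in \<open>auto\<close>)
      also have "\<dots> = (\<integral>\<^sup>+W. (indicator A (?s W) * ennreal (?\<phi> (?s W))) * G W \<partial>lborel)"
      proof (rule nn_integral_cong)
        fix W
        have "ennreal (f W / Z) = ennreal (?\<phi> (?s W)) * G W"
          unfolding G_def using phipos[of "?s W"] Zpos f_nonneg[of W]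
          by (simp add: ennreal_mult[symmetric] field_simps)
        thus "ennreal (post_density L F n xs ys \<alpha> q W) * indicator (?s -` A) W
            = (indicator A (?s W) * ennreal (?\<phi> (?s W))) * G W"
          unfolding post by (simp add: indicator_def mult_ac)
      qed
      also have "\<dots> = (\<integral>\<^sup>+y. indicator A y * ennreal (?\<phi> y) \<partial>lborel) * (\<integral>\<^sup>+W. ennreal (?\<phi> (?s W)) * G W \<partial>lborel)"
        by (rule key_integral[OF s_meas G_meas _ sV GV alpha_pos]) measurable
      also have "\<dots> = emeasure (density lborel (\<lambda>t. ennreal (?\<phi> t))) A"
        unfolding intG using Ab by (simp add: emeasure_density mult.commute)
      finally show "emeasure (distr (posterior L F n xs ys \<alpha> q) lborel ?s) A
          = emeasure (density lborel (\<lambda>t. ennreal (?\<phi> t))) A" .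
    qed
  qed
  have part2: "wc c c0 j Wmap = 0"
    if max: "\<forall>W. post_density L F n xs ys \<alpha> q W \<le> post_density L F n xs ys \<alpha> q Wmap" for Wmap j
  proof (rule ccontr)
    assume ne: "wc c c0 j Wmap \<noteq> 0"
    let ?t = "wc c c0 j Wmap"
    have fmax: "f W \<le> f Wmap" for W
    proof -
      have "f W / Z \<le> f Wmap / Z" using max unfolding post by blast
      thus ?thesis using Zpos by (simp add: divide_le_cancel)
    qed
    have fpos: "f Wmap > 0"
    proof (rule ccontr)
      assume "\<not> f Wmap > 0"
      hence "f W = 0" for W using fmax[of W] f_nonneg[of W] by linarith
      hence "evidence L F n xs ys \<alpha> q = 0" unfolding ev by simp
      thus False using ev_pos by simp
    qed
    have "f ((- ?t) *\<^sub>R Vdir c c0 j + Wmap) * ?\<phi> ?t = f Wmap * ?\<phi> 0"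
      using f_shift[of "- ?t" j Wmap] by simp
    moreover have "?\<phi> ?t < ?\<phi> 0"
    proof -
      have "?t\<^sup>2 / (2 * \<alpha>\<^sup>2) > 0" using ne alpha_pos by simp
      hence "exp (- (?t\<^sup>2 / (2 * \<alpha>\<^sup>2))) < 1" by simp
      moreover have "sqrt (2 * pi * \<alpha>\<^sup>2) > 0" using alpha_pos by simp
      ultimately show ?thesis by (simp add: normal_density_def divide_strict_right_mono)
    qed
    ultimately have "f Wmap * ?\<phi> ?t < f ((- ?t) *\<^sub>R Vdir c c0 j + Wmap) * ?\<phi> ?t"
      using fpos by (metis mult_strict_left_mono)
    hence "f Wmap < f ((- ?t) *\<^sub>R Vdir c c0 j + Wmap)"
      using phipos[of ?t] by simp
    thus False using fmax by (meson not_le)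
  qed
  show ?thesis using part1 part2 by blast
qed

end
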